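(* For $t\in\mathbb N\cup\{\infty\}$ and any nonroot vertex $u$, let $a^t_u(\eta,S)\in\{0,1\}$ be the indicator that $u$ is visited by some frog by time $t$ in the frog model $(\eta,S)$, and let $a^t(\eta,S)=\sum_{v\neq\emptyset}a^t_v(\eta,S)$ be the total number of nonroot vertices visited by time $t$. Then $a^t_u$ and $a^t$ are continuous icv statistics and continuous pgf statistics.
   Context: Frog model: $G$ countable with root $\emptyset$; $(\eta,S)$ consists of counts $\eta(v)\in\{0,1,\dots\}$ for $v\ne\emptyset$ and paths $S_\cdot(v,i)$ with $S_0(v,i)=v$. One active frog starts at $\emptyset$ at time $0$ and is at $S_j(\emptyset,1)$ at time $j$; a frog activated at time $s$ at $v$ is at $S_j(v,i)$ at time $s+j$; when an active frog is at a vertex with sleeping frogs, all of them activate. $\sigma_{P_\cdot}(\eta,S)$: add an extra frog with path $P_\cdot$ at $P_0$ (nonroot). $\Delta_{P_\cdot}f(\eta,S)=f(\sigma_{P_\cdot}(\eta,S))-f(\eta,S)$. $f$ (valued in $[0,\infty]$) is an icv statistic if for all $(\eta,S)$ and paths $P^1_\cdot,\dots,P^m_\cdot$ with a common start: (i) for $m=1,2$, $(-1)^m\Delta_{P^1_\cdot}\cdots\Delta_{P^m_\cdot}f(\eta,S)\le0$ whenever all values $f(\sigma_{P^{u_1}_\cdot}\cdots\sigma_{P^{u_j}_\cdot}(\eta,S))$, $\{u_1,\dots,u_j\}\subseteq\{1,\dots,m\}$, are finite; (ii) $f(\eta,S)=\infty\Rightarrow f(\sigma_{P^1_\cdot}(\eta,S))=\infty$;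 (iii) $f(\sigma_{P^1_\cdot}\sigma_{P^2_\cdot}(\eta,S))=\infty\Rightarrow f(\sigma_{P^i_\cdot}(\eta,S))=\infty$ for $i=1$ or $2$. $f$ is a pgf statistic if (ii),(iii) hold and (i) holds for all $m\ge1$. $f$ is continuous if $\eta_k(v)\nearrow\eta(v)$ for all $v$ implies $f(\eta_k,S)\nearrow f(\eta,S)$. *)

theory Defs
  imports "HOL-Analysis.Analysis" "HOL-Library.Extended_Nat"
begin

text \<open>A frog configuration (eta, S): eta v = number of sleeping frogs at v,
  S v i j = position of the i-th frog of v after j steps. The root is a parameter r;
  its count eta r is unused (normalised to 0) and the root frog is S r 1.\<close>

type_synonym 'v config = "('v \<Rightarrow> nat) \<times> ('v \<Rightarrow> nat \<Rightarrow> nat \<Rightarrow> 'v)"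

definition valid_config :: "'v \<Rightarrow> 'v config \<Rightarrow> bool" where
  "valid_config r c = (fst c r = 0 \<and> (\<forall>v i. snd c v i 0 = v))"

text \<open>reach r eta S u n: along some activation chain, an active frog is at u at time n.
  Vertex u is visited by time t iff reach r eta S u n for some n \<le> t.\<close>

inductive reach :: "'v \<Rightarrow> ('v \<Rightarrow> nat) \<Rightarrow> ('v \<Rightarrow> nat \<Rightarrow> nat \<Rightarrow> 'v) \<Rightarrow> 'v \<Rightarrow> nat \<Rightarrow> bool"
  for r eta S where
  start: "reach r eta S (S r 1 j) j"
| step: "reach r eta S v s \<Longrightarrow> v \<noteq> r \<Longrightarrow> 1 \<le> i \<Longrightarrow> i \<le> eta v
          \<Longrightarrow> reach r eta S (S v i j) (s + j)"

definition visited_by :: "'v \<Rightarrow> enat \<Rightarrow> 'v \<Rightarrow> 'v config \<Rightarrow> bool" where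
  "visited_by r t u c = (\<exists>n. enat n \<le> t \<and> reach r (fst c) (snd c) u n)"

definition a_vis :: "'v \<Rightarrow> enat \<Rightarrow> 'v \<Rightarrow> 'v config \<Rightarrow> ennreal" where
  "a_vis r t u c = (if visited_by r t u c then 1 else 0)"

definition a_tot :: "'v \<Rightarrow> enat \<Rightarrow> 'v config \<Rightarrow> ennreal" where
  "a_tot r t c = (\<Sum>\<^sub>\<infinity>v\<in>{v. v \<noteq> r}. a_vis r t v c)"

text \<open>sigma_P: add an extra frog with path P at P 0 (as frog number eta(P 0)+1).\<close>

definition sigma :: "(nat \<Rightarrow> 'v) \<Rightarrow> 'v config \<Rightarrow> 'v config" where
  "sigma P c = ((fst c)(P 0 := Suc (fst c (P 0))),
                (snd c)(P 0 := (snd c (P 0))(Suc (fst c (P 0)) := P)))"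

definition DeltaR :: "(nat \<Rightarrow> 'v) \<Rightarrow> ('v config \<Rightarrow> real) \<Rightarrow> 'v config \<Rightarrow> real" where
  "DeltaR P g c = g (sigma P c) - g c"

fun Dit :: "(nat \<Rightarrow> 'v) list \<Rightarrow> ('v config \<Rightarrow> real) \<Rightarrow> 'v config \<Rightarrow> real" where
  "Dit [] g = g"
| "Dit (P # Ps) g = DeltaR P (Dit Ps g)"

definition common_start :: "'v \<Rightarrow> (nat \<Rightarrow> 'v) list \<Rightarrow> bool" where
  "common_start r Ps = (\<exists>v. v \<noteq> r \<and> (\<forall>P\<in>set Ps. P 0 = v))"

definition all_finite :: "('v config \<Rightarrow> ennreal) \<Rightarrow> 'v config \<Rightarrow> (nat \<Rightarrow> 'v) list \<Rightarrow> bool" where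
  "all_finite f c Ps = (\<forall>I \<subseteq> {..<length Ps}. f (fold sigma (nths Ps I) c) \<noteq> \<infinity>)"

definition cond_i :: "'v \<Rightarrow> nat \<Rightarrow> ('v config \<Rightarrow> ennreal) \<Rightarrow> bool" where
  "cond_i r m f = (\<forall>c Ps. valid_config r c \<longrightarrow> length Ps = m \<longrightarrow> common_start r Ps
      \<longrightarrow> all_finite f c Ps \<longrightarrow> (-1) ^ m * Dit Ps (\<lambda>y. enn2real (f y)) c \<le> 0)"

definition cond_ii :: "'v \<Rightarrow> ('v config \<Rightarrow> ennreal) \<Rightarrow> bool" where
  "cond_ii r f = (\<forall>c P. valid_config r c \<longrightarrow> P 0 \<noteq> r \<longrightarrow> f c = \<infinity> \<longrightarrow> f (sigma P c) = \<infinity>)"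

definition cond_iii :: "'v \<Rightarrow> ('v config \<Rightarrow> ennreal) \<Rightarrow> bool" where
  "cond_iii r f = (\<forall>c P1 P2. valid_config r c \<longrightarrow> P1 0 \<noteq> r \<longrightarrow> P1 0 = P2 0 \<longrightarrow>
      f (sigma P1 (sigma P2 c)) = \<infinity> \<longrightarrow> f (sigma P1 c) = \<infinity> \<or> f (sigma P2 c) = \<infinity>)"

definition icv_stat :: "'v \<Rightarrow> ('v config \<Rightarrow> ennreal) \<Rightarrow> bool" where
  "icv_stat r f = (cond_i r 1 f \<and> cond_i r 2 f \<and> cond_ii r f \<and> cond_iii r f)"

definition pgf_stat :: "'v \<Rightarrow> ('v config \<Rightarrow> ennreal) \<Rightarrow> bool" where
  "pgf_stat r f = ((\<forall>m\<ge>1. cond_i r m f) \<and> cond_ii r f \<and> cond_iii r f)"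

definition continuous_stat :: "'v \<Rightarrow> ('v config \<Rightarrow> ennreal) \<Rightarrow> bool" where
  "continuous_stat r f = (\<forall>etas eta S. valid_config r (eta, S) \<longrightarrow> (\<forall>k. valid_config r (etas k, S)) \<longrightarrow>
      (\<forall>v. incseq (\<lambda>k. etas k v) \<and> (\<lambda>k. etas k v) \<longlonglongrightarrow> eta v) \<longrightarrow>
      incseq (\<lambda>k. f (etas k, S)) \<and> (\<lambda>k. f (etas k, S)) \<longlonglongrightarrow> f (eta, S))"

end

theory Submission
  imports Defs
begin

definition frogs :: "'v config \<Rightarrow> 'v \<Rightarrow> (nat \<Rightarrow> 'v) set" where
  "frogs c w = {snd c w i | i. 1 \<le> i \<and> i \<le> fst c w}"

inductive reach2 :: "'v \<Rightarrow> (nat \<Rightarrow> 'v) \<Rightarrow> ('v \<Rightarrow> (nat \<Rightarrow> 'v) set) \<Rightarrow> 'v \<Rightarrow> nat \<Rightarrow> bool"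
  for r S0 R where
  start2: "reach2 r S0 R (S0 j) j"
| step2: "reach2 r S0 R v s \<Longrightarrow> v \<noteq> r \<Longrightarrow> P \<in> R v \<Longrightarrow> reach2 r S0 R (P j) (s + j)"

lemma reach_reach2:
  "reach r eta S x n \<Longrightarrow> reach2 r (S r 1) (frogs (eta, S)) x n"
proof (induction rule: reach.induct)
  case (start j) then show ?case by (rule start2)
next
  case (step v s i j)
  then show ?case by (intro step2) (auto simp: frogs_def)
qed

lemma reach2_reach:
  "reach2 r (S r 1) (frogs (eta, S)) x n \<Longrightarrow> reach r eta S x n"
proof (induction rule: reach2.induct)
  case (start2 j) then show ?case by (rule reach.start)
next
  case (step2 v s P j)
  then obtain i where "1 \<le> i" "i \<le> eta v" "P = S v i" by (auto simp: frogs_def)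
  with step2 show ?case by (metis reach.step)
qed

lemma reach_iff: "reach r (fst c) (snd c) x n \<longleftrightarrow> reach2 r (snd c r 1) (frogs c) x n"
  using reach_reach2[of r "fst c" "snd c" x n] reach2_reach[of r "snd c" "fst c" x n]
  by auto

lemma reach2_mono:
  "reach2 r S0 R x n \<Longrightarrow> (\<And>w. R w \<subseteq> R' w) \<Longrightarrow> reach2 r S0 R' x n"
proof (induction rule: reach2.induct)
  case (start2 j) show ?case by (rule reach2.start2)
next
  case (step2 v s P j) then show ?case by (intro reach2.step2) auto
qed

lemma reach2_ext_v:
  assumes "reach2 r S0 (R(v := R v \<union> B)) x n"
  shows "(\<exists>n'\<le>n. reach2 r S0 R x n') \<or> (\<exists>s\<le>n. reach2 r S0 R v s)"
  using assms
proof (induction rule: reach2.induct)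
  case (start2 j) then show ?case by (auto intro: reach2.start2)
next
  case (step2 w s P j)
  from step2.IH show ?case
  proof
    assume "\<exists>n'\<le>s. reach2 r S0 R w n'"
    then obtain n' where n': "n' \<le> s" "reach2 r S0 R w n'" by blast
    show ?case
    proof (cases "P \<in> R w")
      case True
      then have "reach2 r S0 R (P j) (n' + j)" using n' step2.hyps(2) by (intro reach2.step2)
      then show ?thesis using n' by (intro disjI1 exI[of _ "n'+j"]) simp
    next
      case False
      then have "w = v" using step2.hyps(3) by (cases "w = v") simp_all
      then show ?thesis using n' by (intro disjI2 exI[of _ n']) simp
    qed
  next
    assume "\<exists>s'\<le>s. reach2 r S0 R v s'"
    then obtain s' where "s' \<le> s" "reach2 r S0 R v s'" by blast
    then show ?case by (intro disjI2 exI[of _ s']) simp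
  qed
qed

lemma reach2_union:
  assumes "reach2 r S0 (R(v := R v \<union> B)) x n"
  shows "\<exists>n'\<le>n. reach2 r S0 R x n' \<or> (\<exists>P\<in>B. reach2 r S0 (R(v := insert P (R v))) x n')"
  using assms
proof (induction rule: reach2.induct)
  case (start2 j) then show ?case by (auto intro: reach2.start2)
next
  case (step2 w s P j)
  show ?case
  proof (cases "P \<in> R w")
    case True
    from step2.IH obtain n' where n': "n' \<le> s"
      "reach2 r S0 R w n' \<or> (\<exists>P\<in>B. reach2 r S0 (R(v := insert P (R v))) w n')" by blast
    from n'(2) show ?thesis
    proof
      assume "reach2 r S0 R w n'"
      then have "reach2 r S0 R (P j) (n' + j)" using True step2.hyps(2) by (intro reach2.step2)
      then show ?thesis using n' by (intro exI[of _ "n'+j"]) simp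
    next
      assume "\<exists>Q\<in>B. reach2 r S0 (R(v := insert Q (R v))) w n'"
      then obtain Q where Q: "Q \<in> B" "reach2 r S0 (R(v := insert Q (R v))) w n'" by blast
      have "P \<in> (R(v := insert Q (R v))) w" using True by auto
      then have "reach2 r S0 (R(v := insert Q (R v))) (P j) (n' + j)" using Q(2) step2.hyps(2)
        by (intro reach2.step2)
      then show ?thesis using n' Q by (intro exI[of _ "n'+j"] conjI) (simp, blast)
    qed
  next
    case False
    then have wv: "w = v" and PB: "P \<in> B" using step2.hyps(3) by (cases "w = v"; simp)+
    obtain s0 where s0: "s0 \<le> s" "reach2 r S0 R v s0"
      using reach2_ext_v[of r S0 R v B v s] step2.hyps(1) wv by blast
    have a: "reach2 r S0 (R(v := insert P (R v))) v s0"
      using s0(2) by (rule reach2_mono) auto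
    have b: "P \<in> (R(v := insert P (R v))) v" by simp
    have "reach2 r S0 (R(v := insert P (R v))) (P j) (s0 + j)"
      using reach2.step2[OF a _ b] step2.hyps(2) wv by blast
    then show ?thesis using s0 PB by (intro exI[of _ "s0+j"] conjI) (simp, blast)
  qed
qed

lemma sigma_root: "P 0 \<noteq> r \<Longrightarrow> snd (sigma P c) r 1 = snd c r 1"
  by (simp add: sigma_def)

lemma sigma_root': "P 0 \<noteq> r \<Longrightarrow> snd (sigma P c) r = snd c r"
  by (simp add: sigma_def)

lemma frogs_sigma: "frogs (sigma P c) = (frogs c)(P 0 := insert P (frogs c (P 0)))"
proof
  fix w
  show "frogs (sigma P c) w = ((frogs c)(P 0 := insert P (frogs c (P 0)))) w"
  proof (cases "w = P 0")
    case False then show ?thesis by (simp add: frogs_def sigma_def)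
  next
    case True
    have "frogs (sigma P c) w = {((snd c w)(Suc (fst c w) := P)) i | i. 1 \<le> i \<and> i \<le> Suc (fst c w)}"
      using True by (simp add: frogs_def sigma_def)
    also have "\<dots> = insert P (frogs c w)"
      unfolding frogs_def
    proof (intro equalityI subsetI)
      fix x assume "x \<in> {((snd c w)(Suc (fst c w) := P)) i | i. 1 \<le> i \<and> i \<le> Suc (fst c w)}"
      then obtain i where i: "1 \<le> i" "i \<le> Suc (fst c w)" "x = ((snd c w)(Suc (fst c w) := P)) i" by blast
      show "x \<in> insert P {snd c w i |i. 1 \<le> i \<and> i \<le> fst c w}"
      proof (cases "i = Suc (fst c w)")
        case True then show ?thesis using i by simp
      next
        case False then show ?thesis using i by auto
      qed
    next
      fix x assume "x \<in> insert P {snd c w i |i. 1 \<le> i \<and> i \<le> fst c w}"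
      then show "x \<in> {((snd c w)(Suc (fst c w) := P)) i | i. 1 \<le> i \<and> i \<le> Suc (fst c w)}"
      proof
        assume "x = P" then show ?thesis by (intro CollectI exI[of _ "Suc (fst c w)"]) simp
      next
        assume "x \<in> {snd c w i |i. 1 \<le> i \<and> i \<le> fst c w}"
        then obtain i where "1 \<le> i" "i \<le> fst c w" "x = snd c w i" by blast
        then show ?thesis by (intro CollectI exI[of _ i]) simp
      qed
    qed
    finally show ?thesis using True by simp
  qed
qed

lemma fold_sigma:
  assumes "\<forall>P\<in>set L. P 0 = v" "v \<noteq> r"
  shows "snd (fold sigma L c) r 1 = snd c r 1 \<and> frogs (fold sigma L c) = (frogs c)(v := frogs c v \<union> set L)"
  using assms
proof (induction L arbitrary: c)
  case Nil then show ?case by simp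
next
  case (Cons P L)
  have P0: "P 0 = v" using Cons.prems by simp
  have IH: "snd (fold sigma L (sigma P c)) r 1 = snd (sigma P c) r 1 \<and>
     frogs (fold sigma L (sigma P c)) = (frogs (sigma P c))(v := frogs (sigma P c) v \<union> set L)"
    by (rule Cons.IH) (use Cons.prems in auto)
  show ?case using IH P0 Cons.prems(2) by (auto simp add: sigma_root' frogs_sigma fun_eq_iff)
qed

definition vis2 :: "'v \<Rightarrow> enat \<Rightarrow> (nat \<Rightarrow> 'v) \<Rightarrow> ('v \<Rightarrow> (nat \<Rightarrow> 'v) set) \<Rightarrow> 'v \<Rightarrow> bool" where
  "vis2 r t S0 R w = (\<exists>n. enat n \<le> t \<and> reach2 r S0 R w n)"

lemma visited_vis2: "visited_by r t w c = vis2 r t (snd c r 1) (frogs c) w"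
  unfolding visited_by_def vis2_def reach_iff ..

lemma vis2_mono: "vis2 r t S0 R w \<Longrightarrow> (\<And>x. R x \<subseteq> R' x) \<Longrightarrow> vis2 r t S0 R' w"
  unfolding vis2_def by (metis reach2_mono)

lemma vis2_union:
  "vis2 r t S0 (R(v := R v \<union> B)) w \<longleftrightarrow> vis2 r t S0 R w \<or> (\<exists>P\<in>B. vis2 r t S0 (R(v := insert P (R v))) w)"
proof
  assume "vis2 r t S0 (R(v := R v \<union> B)) w"
  then obtain n where n: "enat n \<le> t" "reach2 r S0 (R(v := R v \<union> B)) w n" unfolding vis2_def by blast
  from reach2_union[OF n(2)] obtain n' where n': "n' \<le> n"
    "reach2 r S0 R w n' \<or> (\<exists>P\<in>B. reach2 r S0 (R(v := insert P (R v))) w n')" by blast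
  have "enat n' \<le> t" using n(1) n'(1) by (meson enat_ord_simps(1) order_trans)
  then show "vis2 r t S0 R w \<or> (\<exists>P\<in>B. vis2 r t S0 (R(v := insert P (R v))) w)"
    using n'(2) unfolding vis2_def by blast
next
  assume "vis2 r t S0 R w \<or> (\<exists>P\<in>B. vis2 r t S0 (R(v := insert P (R v))) w)"
  then show "vis2 r t S0 (R(v := R v \<union> B)) w"
  proof
    assume "vis2 r t S0 R w" then show ?thesis by (rule vis2_mono) auto
  next
    assume "\<exists>P\<in>B. vis2 r t S0 (R(v := insert P (R v))) w"
    then obtain P where "P \<in> B" "vis2 r t S0 (R(v := insert P (R v))) w" by blast
    then show ?thesis by (elim vis2_mono) auto
  qed
qed

lemma vis_sigma_mono:
  "P 0 \<noteq> r \<Longrightarrow> visited_by r t w c \<Longrightarrow> visited_by r t w (sigma P c)"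
  unfolding visited_vis2 by (simp add: sigma_root' frogs_sigma) (erule vis2_mono, auto)

lemma vis_fold_mono:
  assumes "\<forall>P\<in>set L. P 0 = v" "v \<noteq> r" "set L' \<subseteq> set L" "visited_by r t w (fold sigma L' c)"
  shows "visited_by r t w (fold sigma L c)"
proof -
  have L': "\<forall>P\<in>set L'. P 0 = v" using assms(1,3) by blast
  show ?thesis using assms(4) unfolding visited_vis2
    using fold_sigma[OF assms(1,2), of c] fold_sigma[OF L' assms(2), of c] assms(3)
    by simp (erule vis2_mono, auto)
qed

lemma vis_sigma2:
  assumes "P 0 = v" "Q 0 = v" "v \<noteq> r"
  shows "visited_by r t w (sigma Q (sigma P c)) \<longleftrightarrow> visited_by r t w (sigma P c) \<or> visited_by r t w (sigma Q c)"
proof -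
  have e: "sigma Q (sigma P c) = fold sigma [P, Q] c" by simp
  have f: "snd (fold sigma [P,Q] c) r 1 = snd c r 1 \<and> frogs (fold sigma [P,Q] c) = (frogs c)(v := frogs c v \<union> {P, Q})"
    using fold_sigma[of "[P,Q]" v r c] assms by auto
  have "visited_by r t w (sigma Q (sigma P c)) \<longleftrightarrow>
     vis2 r t (snd c r 1) (frogs c) w \<or> (\<exists>X\<in>{P,Q}. vis2 r t (snd c r 1) ((frogs c)(v := insert X (frogs c v))) w)"
    unfolding e visited_vis2 using f vis2_union by metis
  also have "\<dots> \<longleftrightarrow> vis2 r t (snd c r 1) ((frogs c)(v := insert P (frogs c v))) w \<or>
      vis2 r t (snd c r 1) ((frogs c)(v := insert Q (frogs c v))) w"
    by (auto elim: vis2_mono)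
  also have "\<dots> \<longleftrightarrow> visited_by r t w (sigma P c) \<or> visited_by r t w (sigma Q c)"
    unfolding visited_vis2 using assms by (simp add: sigma_root' frogs_sigma)
  finally show ?thesis .
qed

lemma Dit_const_minus:
  "Dit Ps (\<lambda>y. a - g y) c = (if Ps = [] then a - g c else - Dit Ps g c)"
proof (induction Ps arbitrary: c)
  case Nil then show ?case by simp
next
  case (Cons P Ps)
  then show ?case by (cases "Ps = []") (simp_all add: DeltaR_def)
qed

lemma Dit_h:
  assumes "\<forall>P\<in>set Ps. P 0 = v" "v \<noteq> r"
  shows "Dit Ps (\<lambda>y. if visited_by r t w y then 0 else 1::real) c =
    (if visited_by r t w c then 0 else 1) *
      prod_list (map (\<lambda>P. (if visited_by r t w (sigma P c) then 0 else 1) - 1) Ps)"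
  using assms
proof (induction Ps arbitrary: c)
  case Nil then show ?case by simp
next
  case (Cons P Ps)
  let ?h = "\<lambda>y. if visited_by r t w y then 0 else 1::real"
  have P0: "P 0 = v" and Ps0: "\<forall>P\<in>set Ps. P 0 = v" using Cons.prems by auto
  have e1: "Dit (P # Ps) ?h c = Dit Ps ?h (sigma P c) - Dit Ps ?h c"
    by (simp add: DeltaR_def)
  have m: "map (\<lambda>Q. ?h (sigma Q (sigma P c)) - 1) Ps =
      map (\<lambda>Q. (if visited_by r t w (sigma P c) \<or> visited_by r t w (sigma Q c) then 0 else 1) - 1) Ps"
    using vis_sigma2[of P v _ r t w c] P0 Cons.prems(2) Ps0 by (intro map_cong) auto
  show ?case
  proof (cases "visited_by r t w (sigma P c)")
    case True
    then show ?thesis unfolding e1 Cons.IH[OF Ps0 Cons.prems(2)] m by simp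
  next
    case False
    then have nc: "\<not> visited_by r t w c" using vis_sigma_mono[of P r t w c] P0 Cons.prems(2) by auto
    show ?thesis unfolding e1 Cons.IH[OF Ps0 Cons.prems(2)] m using False nc by simp
  qed
qed

lemma sign_prod:
  "(\<forall>P\<in>set Ps. x P \<le> (1::real)) \<Longrightarrow> 0 \<le> (-1)^length Ps * prod_list (map (\<lambda>P. x P - 1) Ps)"
proof (induction Ps)
  case Nil then show ?case by simp
next
  case (Cons P Ps)
  have "(-1::real)^length (P # Ps) * prod_list (map (\<lambda>P. x P - 1) (P # Ps)) =
      (1 - x P) * ((-1)^length Ps * prod_list (map (\<lambda>P. x P - 1) Ps))"
    by (simp add: algebra_simps)
  also have "\<dots> \<ge> 0"
  proof (rule mult_nonneg_nonneg)
    show "0 \<le> 1 - x P" using Cons.prems by simp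
    show "0 \<le> (-1)^length Ps * prod_list (map (\<lambda>P. x P - 1) Ps)" using Cons.IH Cons.prems by simp
  qed
  finally show ?case .
qed

lemma enn2real_avis: "enn2real (a_vis r t w y) = 1 - (if visited_by r t w y then 0 else 1)"
  by (simp add: a_vis_def)

lemma avis_sign:
  assumes "Ps \<noteq> []" "\<forall>P\<in>set Ps. P 0 = v" "v \<noteq> r"
  shows "(-1)^length Ps * Dit Ps (\<lambda>y. enn2real (a_vis r t w y)) c \<le> 0"
proof -
  let ?h = "\<lambda>y. if visited_by r t w y then 0 else 1::real"
  have "Dit Ps (\<lambda>y. enn2real (a_vis r t w y)) c = Dit Ps (\<lambda>y. 1 - ?h y) c"
    unfolding enn2real_avis ..
  also have "\<dots> = - Dit Ps ?h c" using assms(1) by (simp only: Dit_const_minus) simp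
  also have "\<dots> = - (?h c * prod_list (map (\<lambda>P. ?h (sigma P c) - 1) Ps))"
    using Dit_h[OF assms(2,3)] by simp
  finally have e: "(-1)^length Ps * Dit Ps (\<lambda>y. enn2real (a_vis r t w y)) c =
      - (?h c * ((-1)^length Ps * prod_list (map (\<lambda>P. ?h (sigma P c) - 1) Ps)))"
    by (simp add: algebra_simps)
  have "0 \<le> (-1)^length Ps * prod_list (map (\<lambda>P. ?h (sigma P c) - 1) Ps)"
    by (rule sign_prod) simp
  moreover have "0 \<le> ?h c" by simp
  ultimately show ?thesis unfolding e by simp
qed

definition Vset :: "'v \<Rightarrow> enat \<Rightarrow> 'v config \<Rightarrow> 'v set" where
  "Vset r t c = {w. w \<noteq> r \<and> visited_by r t w c}"

lemma a_tot_card: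
  "a_tot r t c = (if finite (Vset r t c) then of_nat (card (Vset r t c)) else \<infinity>)"
proof -
  have "a_tot r t c = infsum (\<lambda>_. 1::ennreal) (Vset r t c)"
    unfolding a_tot_def
    by (rule infsum_cong_neutral) (auto simp: Vset_def a_vis_def)
  then show ?thesis
  proof (cases "finite (Vset r t c)")
    case True then show ?thesis using \<open>a_tot r t c = _\<close> by (simp add: infsum_constant)
  next
    case False
    have "infsum (\<lambda>_. 1::ennreal) (Vset r t c) = \<infinity>"
      by (rule infsum_superconst_infinite_ennreal[where b=1]) (use False in auto)
    then show ?thesis using False \<open>a_tot r t c = _\<close> by simp
  qed
qed

lemma Dit_cong:
  "(\<forall>I \<subseteq> {..<length Ps}. g1 (fold sigma (nths Ps I) c) = g2 (fold sigma (nths Ps I) c))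
    \<Longrightarrow> Dit Ps g1 c = Dit Ps g2 c"
proof (induction Ps arbitrary: c)
  case Nil
  then show ?case by (auto dest: spec[of _ "{}"])
next
  case (Cons P Ps)
  have a: "Dit Ps g1 (sigma P c) = Dit Ps g2 (sigma P c)"
  proof (rule Cons.IH, intro allI impI)
    fix I assume I: "I \<subseteq> {..<length Ps}"
    have s: "insert 0 (Suc ` I) \<subseteq> {..<length (P # Ps)}" using I by auto
    have "{j. Suc j \<in> insert 0 (Suc ` I)} = I" by auto
    then have "nths (P # Ps) (insert 0 (Suc ` I)) = P # nths Ps I"
      by (simp add: nths_Cons)
    then show "g1 (fold sigma (nths Ps I) (sigma P c)) = g2 (fold sigma (nths Ps I) (sigma P c))"
      using Cons.prems s by (metis fold_Cons comp_apply)
  qed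
  have b: "Dit Ps g1 c = Dit Ps g2 c"
  proof (rule Cons.IH, intro allI impI)
    fix I assume I: "I \<subseteq> {..<length Ps}"
    have s: "Suc ` I \<subseteq> {..<length (P # Ps)}" using I by auto
    have "{j. Suc j \<in> Suc ` I} = I" by auto
    then have "nths (P # Ps) (Suc ` I) = nths Ps I"
      by (simp add: nths_Cons)
    then show "g1 (fold sigma (nths Ps I) c) = g2 (fold sigma (nths Ps I) c)"
      using Cons.prems s by metis
  qed
  show ?case using a b by (simp add: DeltaR_def)
qed

lemma Dit_sum:
  "Dit Ps (\<lambda>y. \<Sum>w\<in>F. g w y) c = (\<Sum>w\<in>F. Dit Ps (g w) c)"
proof (induction Ps arbitrary: c)
  case Nil then show ?case by simp
next
  case (Cons P Ps) then show ?case by (simp add: DeltaR_def sum_subtractf)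
qed

lemma atot_sign:
  assumes "Ps \<noteq> []" "\<forall>P\<in>set Ps. P 0 = v" "v \<noteq> r" "all_finite (a_tot r t) c Ps"
  shows "(-1)^length Ps * Dit Ps (\<lambda>y. enn2real (a_tot r t y)) c \<le> 0"
proof -
  define F where "F = Vset r t (fold sigma Ps c)"
  have "nths Ps {..<length Ps} = Ps" by (rule nths_all) auto
  then have "a_tot r t (fold sigma Ps c) \<noteq> \<infinity>"
    using assms(4) unfolding all_finite_def by (metis order_refl)
  then have finF: "finite F" unfolding F_def a_tot_card by (auto split: if_splits)
  have eq: "enn2real (a_tot r t (fold sigma (nths Ps I) c)) =
      (\<Sum>w\<in>F. enn2real (a_vis r t w (fold sigma (nths Ps I) c)))" for I
  proof -
    let ?c = "fold sigma (nths Ps I) c"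
    have sub: "Vset r t ?c \<subseteq> F"
      unfolding F_def Vset_def using vis_fold_mono[OF assms(2,3) set_nths_subset] by blast
    then have fin: "finite (Vset r t ?c)" using finF finite_subset by blast
    have "(\<Sum>w\<in>F. enn2real (a_vis r t w ?c)) = (\<Sum>w\<in>F. if w \<in> Vset r t ?c then 1 else 0)"
      by (intro sum.cong) (auto simp: a_vis_def Vset_def F_def)
    also have "\<dots> = (\<Sum>w\<in>F \<inter> Vset r t ?c. 1)" using sum.inter_restrict[OF finF, of "\<lambda>_. 1::real" "Vset r t ?c"] by simp
    also have "\<dots> = real (card (Vset r t ?c))" using sub by (simp add: Int_absorb1)
    finally show ?thesis unfolding a_tot_card using fin by simp
  qed
  have "Dit Ps (\<lambda>y. enn2real (a_tot r t y)) c = Dit Ps (\<lambda>y. \<Sum>w\<in>F. enn2real (a_vis r t w y)) c"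
    by (rule Dit_cong) (simp add: eq)
  also have "\<dots> = (\<Sum>w\<in>F. Dit Ps (\<lambda>y. enn2real (a_vis r t w y)) c)" by (rule Dit_sum)
  finally have "(-1)^length Ps * Dit Ps (\<lambda>y. enn2real (a_tot r t y)) c =
      (\<Sum>w\<in>F. (-1)^length Ps * Dit Ps (\<lambda>y. enn2real (a_vis r t w y)) c)"
    by (simp add: sum_distrib_left)
  also have "\<dots> \<le> 0" by (rule sum_nonpos) (rule avis_sign[OF assms(1,2,3)])
  finally show ?thesis .
qed

lemma cond_i_avis: "m \<ge> 1 \<Longrightarrow> cond_i r m (a_vis r t u)"
  unfolding cond_i_def common_start_def
  by (auto intro!: avis_sign)

lemma cond_i_atot: "m \<ge> 1 \<Longrightarrow> cond_i r m (a_tot r t)"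
  unfolding cond_i_def common_start_def
  by (auto intro!: atot_sign)

lemma avis_fin: "a_vis r t u c \<noteq> \<infinity>"
  by (simp add: a_vis_def)

lemma cond_ii_avis: "cond_ii r (a_vis r t u)"
  unfolding cond_ii_def a_vis_def by auto

lemma cond_iii_avis: "cond_iii r (a_vis r t u)"
  unfolding cond_iii_def a_vis_def by auto

lemma atot_inf: "a_tot r t c = \<infinity> \<longleftrightarrow> infinite (Vset r t c)"
  by (simp add: a_tot_card)

lemma cond_ii_atot: "cond_ii r (a_tot r t)"
  unfolding cond_ii_def atot_inf
proof (intro allI impI)
  fix c and P :: "nat \<Rightarrow> 'a"
  assume "P 0 \<noteq> r" "infinite (Vset r t c)"
  moreover have "Vset r t c \<subseteq> Vset r t (sigma P c)"
    unfolding Vset_def using vis_sigma_mono[of P r t _ c] \<open>P 0 \<noteq> r\<close> by blast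
  ultimately show "infinite (Vset r t (sigma P c))" using finite_subset by blast
qed

lemma cond_iii_atot: "cond_iii r (a_tot r t)"
  unfolding cond_iii_def atot_inf
proof (intro allI impI)
  fix c and P1 P2 :: "nat \<Rightarrow> 'a"
  assume a: "P1 0 \<noteq> r" "P1 0 = P2 0" "infinite (Vset r t (sigma P1 (sigma P2 c)))"
  have "Vset r t (sigma P1 (sigma P2 c)) = Vset r t (sigma P2 c) \<union> Vset r t (sigma P1 c)"
    unfolding Vset_def using vis_sigma2[of P2 "P1 0" P1 r t _ c] a(1,2) by auto
  then show "infinite (Vset r t (sigma P1 c)) \<or> infinite (Vset r t (sigma P2 c))"
    using a(3) by auto
qed

lemma reach_eta_mono:
  "reach r eta S x n \<Longrightarrow> (\<And>w. eta w \<le> eta' w) \<Longrightarrow> reach r eta' S x n"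
proof (induction rule: reach.induct)
  case (start j) show ?case by (rule reach.start)
next
  case (step v s i j)
  then show ?case by (metis reach.step order_trans)
qed

lemma reach_eventually:
  "reach r eta S x n \<Longrightarrow> (\<And>w. eventually (\<lambda>k. etas k w = eta w) sequentially)
    \<Longrightarrow> eventually (\<lambda>k. reach r (etas k) S x n) sequentially"
proof (induction rule: reach.induct)
  case (start j) show ?case by (intro always_eventually allI) (rule reach.start)
next
  case (step v s i j)
  have "eventually (\<lambda>k. reach r (etas k) S v s \<and> etas k v = eta v) sequentially"
    using step.IH step.prems by (intro eventually_conj) auto
  then show ?case
    by eventually_elim (use step.hyps in \<open>auto intro: reach.step\<close>)
qed

lemma vis_cont:
  assumes "\<forall>v. incseq (\<lambda>k. etas k v) \<and> (\<lambda>k. etas k v) \<longlonglongrightarrow> eta v"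
  shows "k \<le> k' \<Longrightarrow> visited_by r t w (etas k, S) \<Longrightarrow> visited_by r t w (etas k', S)"
    and "visited_by r t w (etas k, S) \<Longrightarrow> visited_by r t w (eta, S)"
    and "visited_by r t w (eta, S) \<Longrightarrow> eventually (\<lambda>k. visited_by r t w (etas k, S)) sequentially"
proof -
  have inc: "k \<le> k' \<Longrightarrow> etas k v \<le> etas k' v" for k k' v
    using assms by (auto simp: incseq_def)
  have le: "etas k v \<le> eta v" for k v
    using assms incseq_le by blast
  have ev: "eventually (\<lambda>k. etas k v = eta v) sequentially" for v
  proof -
    have "(\<lambda>k. etas k v) \<longlonglongrightarrow> eta v" using assms by blast
    then show ?thesis by (simp add: tendsto_discrete)
  qed
  show "k \<le> k' \<Longrightarrow> visited_by r t w (etas k, S) \<Longrightarrow> visited_by r t w (etas k', S)"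
    unfolding visited_by_def using reach_eta_mono inc by fastforce
  show "visited_by r t w (etas k, S) \<Longrightarrow> visited_by r t w (eta, S)"
    unfolding visited_by_def using reach_eta_mono le by fastforce
  show "visited_by r t w (eta, S) \<Longrightarrow> eventually (\<lambda>k. visited_by r t w (etas k, S)) sequentially"
  proof -
    assume "visited_by r t w (eta, S)"
    then obtain n where n: "enat n \<le> t" "reach r eta S w n" unfolding visited_by_def by auto
    have "eventually (\<lambda>k. reach r (etas k) S w n) sequentially"
      using reach_eventually[OF n(2) ev] .
    then show ?thesis by eventually_elim (use n(1) in \<open>auto simp: visited_by_def\<close>)
  qed
qed

lemma cont_avis: "continuous_stat r (a_vis r t u)"
  unfolding continuous_stat_def
proof (intro allI impI conjI)
  fix etas :: "nat \<Rightarrow> 'a \<Rightarrow> nat" and eta :: "'a \<Rightarrow> nat" and S :: "'a \<Rightarrow> nat \<Rightarrow> nat \<Rightarrow> 'a"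
  assume a: "\<forall>v. incseq (\<lambda>k. etas k v) \<and> (\<lambda>k. etas k v) \<longlonglongrightarrow> eta v"
  show "incseq (\<lambda>k. a_vis r t u (etas k, S))"
    unfolding incseq_def using vis_cont(1)[OF a] by (auto simp: a_vis_def)
  show "(\<lambda>k. a_vis r t u (etas k, S)) \<longlonglongrightarrow> a_vis r t u (eta, S)"
  proof (cases "visited_by r t u (eta, S)")
    case True
    have "eventually (\<lambda>k. a_vis r t u (etas k, S) = a_vis r t u (eta, S)) sequentially"
      using vis_cont(3)[OF a True] by eventually_elim (use True in \<open>simp add: a_vis_def\<close>)
    then show ?thesis by (rule tendsto_eventually)
  next
    case False
    then have "a_vis r t u (etas k, S) = a_vis r t u (eta, S)" for k
      using vis_cont(2)[OF a, of r t u k S] by (auto simp: a_vis_def)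
    then show ?thesis by simp
  qed
qed

lemma a_tot_mono: "Vset r t c \<subseteq> Vset r t c' \<Longrightarrow> a_tot r t c \<le> a_tot r t c'"
  unfolding a_tot_card by (auto simp: card_mono finite_subset)

lemma cont_atot: "continuous_stat r (a_tot r t)"
  unfolding continuous_stat_def
proof (intro allI impI conjI)
  fix etas :: "nat \<Rightarrow> 'a \<Rightarrow> nat" and eta :: "'a \<Rightarrow> nat" and S :: "'a \<Rightarrow> nat \<Rightarrow> nat \<Rightarrow> 'a"
  assume a: "\<forall>v. incseq (\<lambda>k. etas k v) \<and> (\<lambda>k. etas k v) \<longlonglongrightarrow> eta v"
  have sub: "Vset r t (etas k, S) \<subseteq> Vset r t (eta, S)" for k
    unfolding Vset_def using vis_cont(2)[OF a] by blast
  show "incseq (\<lambda>k. a_tot r t (etas k, S))"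
    unfolding incseq_def
  proof (intro allI impI)
    fix m n :: nat assume "m \<le> n"
    then show "a_tot r t (etas m, S) \<le> a_tot r t (etas n, S)"
      by (intro a_tot_mono) (auto simp: Vset_def intro: vis_cont(1)[OF a])
  qed
  show "(\<lambda>k. a_tot r t (etas k, S)) \<longlonglongrightarrow> a_tot r t (eta, S)"
  proof (cases "finite (Vset r t (eta, S))")
    case True
    have "eventually (\<lambda>k. \<forall>w\<in>Vset r t (eta, S). visited_by r t w (etas k, S)) sequentially"
      using True by (rule eventually_ball_finite) (auto simp: Vset_def intro: vis_cont(3)[OF a])
    then have "eventually (\<lambda>k. a_tot r t (etas k, S) = a_tot r t (eta, S)) sequentially"
    proof eventually_elim
      case (elim k)
      then have "Vset r t (etas k, S) = Vset r t (eta, S)" using sub[of k] by (auto simp: Vset_def)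
      then show ?case by (simp only: a_tot_card)
    qed
    then show ?thesis by (rule tendsto_eventually)
  next
    case False
    have inf: "a_tot r t (eta, S) = \<infinity>" by (subst atot_inf) (rule False)
    show ?thesis unfolding inf
    proof (rule order_tendstoI)
      fix y :: ennreal assume "y < \<infinity>"
      then obtain N where N: "y < of_nat N" using ennreal_Ex_less_of_nat by (auto simp: top_unique)
      obtain B where B: "finite B" "card B = N" "B \<subseteq> Vset r t (eta, S)"
        using infinite_arbitrarily_large[OF False] by blast
      have "eventually (\<lambda>k. \<forall>w\<in>B. visited_by r t w (etas k, S)) sequentially"
        using B(1) by (rule eventually_ball_finite) (use B(3) in \<open>auto simp: Vset_def intro: vis_cont(3)[OF a]\<close>)
      then show "eventually (\<lambda>k. y < a_tot r t (etas k, S)) sequentially"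
      proof eventually_elim
        case (elim k)
        then have BV: "B \<subseteq> Vset r t (etas k, S)" using B(3) by (auto simp: Vset_def)
        have "of_nat N \<le> a_tot r t (etas k, S)"
        proof (cases "finite (Vset r t (etas k, S))")
          case True
          then show ?thesis using BV B(2) card_mono[OF True BV] by (simp add: a_tot_card)
        next
          case False then show ?thesis by (simp add: a_tot_card)
        qed
        then show ?case using N by (rule order.strict_trans2[rotated])
      qed
    next
      fix y :: ennreal assume "y > \<infinity>" then show "eventually (\<lambda>k. a_tot r t (etas k, S) < y) sequentially"
        by simp
    qed
  qed
qed

theorem proposition21:
  fixes r :: "'v::countable" and t :: enat and u :: 'v
  assumes "u \<noteq> r"
  shows "continuous_stat r (a_vis r t u) \<and> icv_stat r (a_vis r t u) \<and> pgf_stat r (a_vis r t u)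
       \<and> continuous_stat r (a_tot r t) \<and> icv_stat r (a_tot r t) \<and> pgf_stat r (a_tot r t)"
  unfolding icv_stat_def pgf_stat_def
  using cont_avis[of r t u] cont_atot[of r t] cond_i_avis[of _ r t u] cond_i_atot[of _ r t]
    cond_ii_avis[of r t u] cond_iii_avis[of r t u] cond_ii_atot[of r t] cond_iii_atot[of r t]
  by (intro conjI allI impI) auto

end
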